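(* Let $\theta\in(0,1)$ be irrational and $k\in\Lambda$. Then any two distinct component intervals $I_k(i),I_k(i')$ ($1\le i\ne i'\le q_k$) of $D_k$ are separated by a gap of length at least $\tfrac17\|q_{k-1}\theta\|$.
   Context: $\mathbb T=\mathbb R/\mathbb Z$, points identified with fractional parts; $(x-a,x+b)$ denotes the projection to $\mathbb T$ of the real interval. $\|t\|$ is the distance to the nearest integer. $\theta=[0;a_1,a_2,\dots]$ with convergent denominators $q_0=1$, $q_{k+1}=a_{k+1}q_k+q_{k-1}$. For $k\ge0$: $r_{k+1}=\lfloor\sqrt{4a_{k+1}+5}\rfloor-3$ if $a_{k+1}\ne2$ and $r_{k+1}=1$ if $a_{k+1}=2$; $\tilde r_{k+1}=2$ if $a_{k+1}=4$ and $a_{k+2}\ge2$, and $\tilde r_{k+1}=r_{k+1}$ otherwise. $\Lambda=\{k\in\mathbb N: a_{k+1}\ge3\text{ or }a_{k+2}=2\}$. For $k\in\Lambda$ put $R_k=\tilde r_{k+1}\|q_k\theta\|+\|q_{k+1}\theta\|$, and $L_k=\|q_k\theta\|$ if $a_{k+2}\ne2$, $L_k=\|q_{k+1}\theta\|+\|q_{k+2}\theta\|$ if $a_{k+2}=2$; set $I_k(i)=(i\theta-L_k,\,i\theta+R_k)$ if $k$ is even and $I_k(i)=(i\theta-R_k,\,i\theta+L_k)$ if $k$ is odd, and $D_k=\bigcup_{i=1}^{q_k}I_k(i)$. *)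

theory Defs
  imports Complex_Main
begin

definition dnint :: "real \<Rightarrow> real" where
  "dnint t = \<bar>t - of_int (round t)\<bar>"

fun cf_x :: "real \<Rightarrow> nat \<Rightarrow> real" where
  "cf_x th 0 = th"
| "cf_x th (Suc n) = frac (1 / cf_x th n)"

text \<open>Partial quotients: theta = [0; a_1, a_2, ...], a_(n+1) = floor(1/x_n); a_0 = 0.\<close>
fun cf_a :: "real \<Rightarrow> nat \<Rightarrow> nat" where
  "cf_a th 0 = 0"
| "cf_a th (Suc n) = nat \<lfloor>1 / cf_x th n\<rfloor>"

text \<open>Convergent denominators: q_0 = 1, q_1 = a_1 (q_(-1) = 0), q_(k+1) = a_(k+1) q_k + q_(k-1).\<close>
fun cf_q :: "real \<Rightarrow> nat \<Rightarrow> nat" where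
  "cf_q th 0 = 1"
| "cf_q th (Suc 0) = cf_a th 1"
| "cf_q th (Suc (Suc n)) = cf_a th (n + 2) * cf_q th (Suc n) + cf_q th n"

text \<open>r_(k+1), as a function of k.\<close>
definition r_coef :: "real \<Rightarrow> nat \<Rightarrow> int" where
  "r_coef th k = (if cf_a th (k+1) = 2 then 1
                  else \<lfloor>sqrt (4 * real (cf_a th (k+1)) + 5)\<rfloor> - 3)"

text \<open>tilde r_(k+1), as a function of k.\<close>
definition rt_coef :: "real \<Rightarrow> nat \<Rightarrow> int" where
  "rt_coef th k = (if cf_a th (k+1) = 4 \<and> cf_a th (k+2) \<ge> 2 then 2 else r_coef th k)"

definition Lambda_set :: "real \<Rightarrow> nat set" where
  "Lambda_set th = {k. cf_a th (k+1) \<ge> 3 \<or> cf_a th (k+2) = 2}"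

definition R_len :: "real \<Rightarrow> nat \<Rightarrow> real" where
  "R_len th k = of_int (rt_coef th k) * dnint (real (cf_q th k) * th)
                + dnint (real (cf_q th (k+1)) * th)"

definition L_len :: "real \<Rightarrow> nat \<Rightarrow> real" where
  "L_len th k = (if cf_a th (k+2) \<noteq> 2 then dnint (real (cf_q th k) * th)
                 else dnint (real (cf_q th (k+1)) * th) + dnint (real (cf_q th (k+2)) * th))"

text \<open>The interval I_k(i) on the circle, represented by the set of real offsets t
  such that i*theta + t (mod 1) lies in it: (-L_k, R_k) for k even, (-R_k, L_k) for k odd.\<close>
definition I_offsets :: "real \<Rightarrow> nat \<Rightarrow> real set" where
  "I_offsets th k = (if even k then {- L_len th k <..< R_len th k}
                     else {- R_len th k <..< L_len th k})"

text \<open>Points of I_k(i), as real representatives (points of T = R/Z are taken mod 1).\<close>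
definition I_int :: "real \<Rightarrow> nat \<Rightarrow> nat \<Rightarrow> real set" where
  "I_int th k i = (\<lambda>t. real i * th + t) ` I_offsets th k"

end

theory Submission
  imports Defs
begin

fun cf_p :: "real \<Rightarrow> nat \<Rightarrow> nat" where
  "cf_p th 0 = 0"
| "cf_p th (Suc 0) = 1"
| "cf_p th (Suc (Suc n)) = cf_a th (n + 2) * cf_p th (Suc n) + cf_p th n"

definition DD :: "real \<Rightarrow> nat \<Rightarrow> real" where
  "DD th n = (\<Prod>j\<le>n. cf_x th j)"

lemma x_props:
  assumes "0 < th" "th < 1" "th \<notin> \<rat>"
  shows "cf_x th n \<notin> \<rat> \<and> 0 < cf_x th n \<and> cf_x th n < 1"
proof (induction n)
  case 0 then show ?case using assms by simp
next
  case (Suc n)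
  define y where "y = 1 / cf_x th n"
  have yq: "y \<notin> \<rat>"
  proof
    assume "y \<in> \<rat>"
    then have "1 / y \<in> \<rat>" by simp
    moreover have "1 / y = cf_x th n" using Suc by (simp add: y_def)
    ultimately show False using Suc by simp
  qed
  have fq: "frac y \<notin> \<rat>"
  proof
    assume "frac y \<in> \<rat>"
    then have "frac y + of_int \<lfloor>y\<rfloor> \<in> \<rat>" by simp
    then show False using yq by (simp add: frac_def)
  qed
  have "y \<notin> \<int>"
  proof
    assume "y \<in> \<int>" then have "y \<in> \<rat>" using Ints_subset_Rats by blast
    then show False using yq by simp
  qed
  have "frac y \<noteq> 0" using \<open>y \<notin> \<int>\<close> by simp
  then have "0 < frac y" using frac_ge_0[of y] by linarith
  then show ?case using fq frac_lt_1[of y] by (simp add: y_def)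
qed

lemma a_eq:
  assumes "0 < th" "th < 1" "th \<notin> \<rat>"
  shows "real (cf_a th (Suc n)) = 1 / cf_x th n - cf_x th (Suc n)"
    and "cf_a th (Suc n) \<ge> 1"
proof -
  have x: "0 < cf_x th n" "cf_x th n < 1" using x_props[OF assms] by auto
  then have "1 < 1 / cf_x th n" by simp
  then have fl: "\<lfloor>1 / cf_x th n\<rfloor> \<ge> 1" by linarith
  have "real (nat \<lfloor>1 / cf_x th n\<rfloor>) = of_int \<lfloor>1 / cf_x th n\<rfloor>"
    using fl x by (subst of_nat_nat) auto
  then show "real (cf_a th (Suc n)) = 1 / cf_x th n - cf_x th (Suc n)"
    by (simp add: frac_def)
  show "cf_a th (Suc n) \<ge> 1" using nat_mono[OF fl] by (simp add: cf_a.simps)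
qed

declare cf_x.simps(2)[simp del] cf_a.simps(2)[simp del]

lemma DD_pos:
  assumes "0 < th" "th < 1" "th \<notin> \<rat>"
  shows "0 < DD th n"
  unfolding DD_def using x_props[OF assms] by (simp add: prod_pos)

lemma DD_Suc:
  shows "DD th (Suc n) = DD th n * cf_x th (Suc n)"
  unfolding DD_def by (simp add: atMost_Suc mult.commute)

lemma DD_dec:
  assumes "0 < th" "th < 1" "th \<notin> \<rat>"
  shows "DD th (Suc n) < DD th n"
  using DD_Suc[of th n] DD_pos[OF assms, of n] x_props[OF assms, of "Suc n"] by simp

lemma DD_0: "DD th 0 = th" by (simp add: DD_def)

lemma DD_1:
  assumes "0 < th" "th < 1" "th \<notin> \<rat>"
  shows "DD th 1 = 1 - real (cf_a th 1) * th"
proof -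
  have "DD th 1 = th * cf_x th 1" using DD_Suc[of th 0] by (simp add: DD_0)
  also have "cf_x th 1 = 1 / th - real (cf_a th 1)" using a_eq(1)[OF assms, of 0] by simp
  finally have "DD th 1 = th * (1 / th - real (cf_a th 1))" .
  then show ?thesis using assms by (simp add: right_diff_distrib)
qed

lemma DD_rec:
  assumes "0 < th" "th < 1" "th \<notin> \<rat>"
  shows "DD th (Suc (Suc n)) = DD th n - real (cf_a th (n+2)) * DD th (Suc n)"
proof -
  have x: "0 < cf_x th (Suc n)" using x_props[OF assms] by auto
  have e: "cf_x th (Suc (Suc n)) = 1 / cf_x th (Suc n) - real (cf_a th (n+2))"
    using a_eq(1)[OF assms, of "Suc n"] by simp
  have "DD th (Suc (Suc n)) = DD th n * cf_x th (Suc n) * cf_x th (Suc (Suc n))"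
    using DD_Suc[of th "Suc n"] DD_Suc[of th n] by simp
  also have "\<dots> = DD th n * (1 - real (cf_a th (n+2)) * cf_x th (Suc n))"
    using x by (simp add: e field_simps)
  finally show ?thesis using DD_Suc[of th n] by (simp add: algebra_simps)
qed

lemma err_pair:
  assumes "0 < th" "th < 1" "th \<notin> \<rat>"
  shows "real (cf_q th n) * th - real (cf_p th n) = (-1)^n * DD th n \<and>
         real (cf_q th (Suc n)) * th - real (cf_p th (Suc n)) = (-1)^(Suc n) * DD th (Suc n)"
proof (induction n)
  case 0 then show ?case using DD_1[OF assms] by (simp add: DD_0)
next
  case (Suc n)
  have r: "DD th (Suc (Suc n)) = DD th n - real (cf_a th (n+2)) * DD th (Suc n)"
    by (rule DD_rec[OF assms])
  have "real (cf_q th (Suc (Suc n))) * th - real (cf_p th (Suc (Suc n)))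
     = real (cf_a th (n+2)) * (real (cf_q th (Suc n)) * th - real (cf_p th (Suc n)))
       + (real (cf_q th n) * th - real (cf_p th n))"
    by (simp add: algebra_simps)
  also have "\<dots> = real (cf_a th (n+2)) * (- ((-1)^n * DD th (Suc n))) + (-1)^n * DD th n"
    using Suc by simp
  also have "\<dots> = (-1)^n * (DD th n - real (cf_a th (n+2)) * DD th (Suc n))"
    by (simp add: algebra_simps)
  also have "\<dots> = (-1)^(Suc (Suc n)) * DD th (Suc (Suc n))"
    using r by simp
  finally show ?case using Suc by simp
qed

lemma err:
  assumes "0 < th" "th < 1" "th \<notin> \<rat>"
  shows "real (cf_q th n) * th - real (cf_p th n) = (-1)^n * DD th n"
  using err_pair[OF assms] by blast

lemma det:
  "int (cf_q th (Suc n)) * int (cf_p th n) - int (cf_p th (Suc n)) * int (cf_q th n) = (-1)^(Suc n)"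
proof (induction n)
  case 0 then show ?case by simp
next
  case (Suc n)
  have "int (cf_q th (Suc (Suc n))) * int (cf_p th (Suc n)) - int (cf_p th (Suc (Suc n))) * int (cf_q th (Suc n))
     = - (int (cf_q th (Suc n)) * int (cf_p th n) - int (cf_p th (Suc n)) * int (cf_q th n))"
    by (simp add: algebra_simps)
  then show ?case using Suc by simp
qed

lemma q_pos:
  assumes "0 < th" "th < 1" "th \<notin> \<rat>"
  shows "1 \<le> cf_q th n \<and> 1 \<le> cf_q th (Suc n)"
proof (induction n)
  case 0 then show ?case using a_eq(2)[OF assms, of 0] by simp
next
  case (Suc n)
  have "1 \<le> cf_a th (n+2)" using a_eq(2)[OF assms, of "Suc n"] by simp
  then have "1 * 1 \<le> cf_a th (n+2) * cf_q th (Suc n)" using Suc by (intro mult_mono) auto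
  then show ?case using Suc by simp
qed

lemma best_approx:
  assumes "0 < th" "th < 1" "th \<notin> \<rat>"
    and "0 < j" "j < int (cf_q th (Suc m))"
  shows "DD th m \<le> \<bar>real_of_int j * th - real_of_int p\<bar>"
proof -
  define Q1 where "Q1 = int (cf_q th (Suc m))"
  define P1 where "P1 = int (cf_p th (Suc m))"
  define Q0 where "Q0 = int (cf_q th m)"
  define P0 where "P0 = int (cf_p th m)"
  define d where "d = Q1 * P0 - P1 * Q0"
  have d: "d = (-1)^(Suc m)" using det[of th m] by (simp add: d_def Q1_def P1_def Q0_def P0_def)
  have dd: "d * d = 1" using d by (simp add: power_mult_distrib[symmetric] flip: power_add)
  define u where "u = d * (j * P0 - p * Q0)"
  define v where "v = d * (p * Q1 - j * P1)"
  have hj: "j = u * Q1 + v * Q0"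
  proof -
    have "u * Q1 + v * Q0 = d * (j * d)" by (simp add: u_def v_def d_def algebra_simps)
    then show ?thesis using dd by (simp add: algebra_simps)
  qed
  have hp: "p = u * P1 + v * P0"
  proof -
    have "u * P1 + v * P0 = d * (p * d)" by (simp add: u_def v_def d_def algebra_simps)
    then show ?thesis using dd by (simp add: algebra_simps)
  qed
  define E1 where "E1 = real_of_int Q1 * th - real_of_int P1"
  define E0 where "E0 = real_of_int Q0 * th - real_of_int P0"
  have E1: "E1 = (-1)^(Suc m) * DD th (Suc m)"
    using err[OF assms(1-3), of "Suc m"] by (simp add: E1_def Q1_def P1_def)
  have E0: "E0 = (-1)^m * DD th m"
    using err[OF assms(1-3), of m] by (simp add: E0_def Q0_def P0_def)
  have D0: "0 < DD th m" "0 < DD th (Suc m)" using DD_pos[OF assms(1-3)] by auto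
  have aE0: "\<bar>E0\<bar> = DD th m" using E0 D0 by (simp add: abs_mult)
  have E10: "E1 * E0 \<le> 0"
  proof -
    have "E1 * E0 = - (DD th (Suc m) * DD th m)"
      by (simp add: E1 E0 algebra_simps power_mult_distrib[symmetric] flip: power_add)
    then show ?thesis using D0 by (simp add: mult_pos_pos)
  qed
  have lin: "real_of_int j * th - real_of_int p = real_of_int u * E1 + real_of_int v * E0"
    by (simp add: hj hp E1_def E0_def algebra_simps)
  have Q1p: "1 \<le> Q1" "1 \<le> Q0" using q_pos[OF assms(1-3), of m] by (auto simp: Q1_def Q0_def)
  have jl: "j < Q1" using assms(5) by (simp add: Q1_def)
  have v0: "v \<noteq> 0"
  proof
    assume "v = 0"
    then have "j = u * Q1" using hj by simp
    moreover have "u \<le> 0 \<or> 1 \<le> u" by linarith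
    ultimately show False using assms(4) jl Q1p
      by (metis mult_le_cancel_right1 mult_nonpos_nonneg not_less order_le_less_trans
          zero_le_one order.trans)
  qed
  show ?thesis
  proof (cases "u = 0")
    case True
    then have "real_of_int j * th - real_of_int p = real_of_int v * E0" using lin by simp
    then have "\<bar>real_of_int j * th - real_of_int p\<bar> = \<bar>real_of_int v\<bar> * DD th m"
      by (simp add: abs_mult aE0)
    moreover have "1 \<le> \<bar>real_of_int v\<bar>" using v0 by linarith
    ultimately show ?thesis using D0 by (metis mult_le_cancel_right1 less_le_not_le)
  next
    case False
    have uv: "u * v < 0"
    proof (rule ccontr)
      assume "\<not> u * v < 0"
      then have "(0 < u \<and> 0 < v) \<or> (u < 0 \<and> v < 0)" using False v0
        by (metis linorder_neqE_linordered_idom mult_neg_pos mult_pos_neg)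
      then show False
      proof
        assume "0 < u \<and> 0 < v"
        then have "Q1 \<le> u * Q1" "0 \<le> v * Q0" using Q1p by auto
        then show False using hj jl by linarith
      next
        assume "u < 0 \<and> v < 0"
        then have "u * Q1 < 0" "v * Q0 < 0" using Q1p by (auto simp: mult_neg_pos)
        then show False using hj assms(4) by linarith
      qed
    qed
    have uvr: "real_of_int u * real_of_int v \<le> 0" using uv
      by (metis of_int_less_0_iff of_int_mult less_imp_le)
    have prodnn: "(real_of_int u * E1) * (real_of_int v * E0) \<ge> 0"
    proof -
      have "(real_of_int u * E1) * (real_of_int v * E0) = (real_of_int u * real_of_int v) * (E1 * E0)"
        by (simp add: algebra_simps)
      then show ?thesis using mult_nonpos_nonpos[OF uvr E10] by linarith
    qed
    have ge: "\<bar>real_of_int u * E1 + real_of_int v * E0\<bar> \<ge> \<bar>real_of_int v * E0\<bar>"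
      using prodnn by (smt (verit) mult_nonneg_nonneg mult_nonpos_nonpos zero_le_mult_iff)
    have "\<bar>real_of_int v * E0\<bar> = \<bar>real_of_int v\<bar> * DD th m" by (simp add: abs_mult aE0)
    moreover have "1 \<le> \<bar>real_of_int v\<bar>" using v0 by linarith
    ultimately have "\<bar>real_of_int v * E0\<bar> \<ge> DD th m" using D0
      by (metis mult_le_cancel_right1 less_le_not_le)
    then show ?thesis using ge lin by linarith
  qed
qed

lemma s_bound:
  fixes s a :: int
  assumes "3 \<le> s" "s * s \<le> 4 * a + 5" "1 \<le> a"
  shows "7 * (s - 2) \<le> 6 * a + 2" and "3 \<le> a \<Longrightarrow> 7 * (s - 2) \<le> 6 * a - 1"
proof -
  have A: "7 * (s - 2) \<le> 6 * a - 1" if "3 \<le> a"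
  proof (cases "s \<le> 4")
    case True then show ?thesis using that by (simp add: algebra_simps)
  next
    case False
    then have "(s - 5) * (3 * s + 1) \<ge> 0" by simp
    then have "3 * (s * s) \<ge> 14 * s + 5" by (simp add: algebra_simps)
    then show ?thesis using assms False by (simp add: algebra_simps)
  qed
  show "3 \<le> a \<Longrightarrow> 7 * (s - 2) \<le> 6 * a - 1" by (rule A)
  show "7 * (s - 2) \<le> 6 * a + 2"
  proof (cases "3 \<le> a")
    case True then show ?thesis using A by linarith
  next
    case False
    then have "s * s \<le> 13" using assms by linarith
    moreover have "4 * 4 \<le> s * s" if "4 \<le> s" using that by (intro mult_mono) auto
    ultimately have "s \<le> 3" by linarith
    then show ?thesis using assms by (simp add: algebra_simps)
  qed
qed

lemma floor_sqrt_props: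
  fixes a :: nat
  assumes "1 \<le> a"
  shows "3 \<le> \<lfloor>sqrt (4 * real a + 5)\<rfloor>"
    and "\<lfloor>sqrt (4 * real a + 5)\<rfloor> * \<lfloor>sqrt (4 * real a + 5)\<rfloor> \<le> 4 * int a + 5"
proof -
  define s where "s = \<lfloor>sqrt (4 * real a + 5)\<rfloor>"
  have "(3::real)^2 \<le> 4 * real a + 5" using assms by simp
  then have "sqrt (3^2) \<le> sqrt (4 * real a + 5)" by (rule real_sqrt_le_mono)
  moreover have "sqrt (3^2) = (3::real)" by simp
  ultimately have "3 \<le> sqrt (4 * real a + 5)" by simp
  then show "3 \<le> \<lfloor>sqrt (4 * real a + 5)\<rfloor>" by linarith
  then have s0: "0 \<le> real_of_int s" by (simp add: s_def)
  have "real_of_int s \<le> sqrt (4 * real a + 5)" by (simp add: s_def)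
  then have "real_of_int s * real_of_int s \<le> sqrt (4 * real a + 5) * sqrt (4 * real a + 5)"
    using s0 by (intro mult_mono) auto
  also have "\<dots> = 4 * real a + 5" by simp
  finally have "real_of_int (s * s) \<le> real_of_int (4 * int a + 5)" by simp
  then show "\<lfloor>sqrt (4 * real a + 5)\<rfloor> * \<lfloor>sqrt (4 * real a + 5)\<rfloor> \<le> 4 * int a + 5"
    unfolding s_def of_int_le_iff .
qed

lemma rt_bound:
  assumes "1 \<le> cf_a th (k+1)"
  shows "0 \<le> rt_coef th k"
    and "7 * (rt_coef th k + 1) \<le> 6 * int (cf_a th (k+1)) + 2"
    and "3 \<le> cf_a th (k+1) \<Longrightarrow> 7 * (rt_coef th k + 1) \<le> 6 * int (cf_a th (k+1)) - 1"
proof -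
  define a where "a = cf_a th (k+1)"
  define s where "s = \<lfloor>sqrt (4 * real a + 5)\<rfloor>"
  have a1: "1 \<le> a" using assms by (simp add: a_def)
  have s3: "3 \<le> s" and ss: "s * s \<le> 4 * int a + 5"
    using floor_sqrt_props[OF a1] by (auto simp: s_def)
  have B1: "7 * (s - 2) \<le> 6 * int a + 2" using s_bound(1)[OF s3 ss] a1 by simp
  have B2: "3 \<le> a \<Longrightarrow> 7 * (s - 2) \<le> 6 * int a - 1" using s_bound(2)[OF s3 ss] a1 by simp
  have a4: "a = 4 \<Longrightarrow> s \<le> 4"
  proof -
    assume "a = 4"
    then have "s * s \<le> 21" using ss by simp
    moreover have "5 * 5 \<le> s * s" if "5 \<le> s" using that by (intro mult_mono) auto
    ultimately show "s \<le> 4" by linarith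
  qed
  have rt: "rt_coef th k = (if a = 4 \<and> cf_a th (k+2) \<ge> 2 then 2 else if a = 2 then 1 else s - 3)"
    by (simp add: rt_coef_def r_coef_def a_def s_def)
  show "0 \<le> rt_coef th k" using rt s3 by auto
  show "7 * (rt_coef th k + 1) \<le> 6 * int (cf_a th (k+1)) + 2"
    using rt B1 unfolding a_def[symmetric] by auto
  show "3 \<le> cf_a th (k+1) \<Longrightarrow> 7 * (rt_coef th k + 1) \<le> 6 * int (cf_a th (k+1)) - 1"
    using rt B2 unfolding a_def[symmetric] by auto
qed


lemma dn_le:
  assumes "0 < th" "th < 1" "th \<notin> \<rat>"
  shows "dnint (real (cf_q th n) * th) \<le> DD th n"
proof -
  have "dnint (real (cf_q th n) * th) \<le> \<bar>real (cf_q th n) * th - real_of_int (int (cf_p th n))\<bar>"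
    unfolding dnint_def by (rule round_diff_minimal)
  also have "\<dots> = DD th n" using err[OF assms, of n] DD_pos[OF assms, of n] by (simp add: abs_mult)
  finally show ?thesis .
qed

lemma key_ineq:
  assumes "0 < th" "th < 1" "th \<notin> \<rat>" "Suc m \<in> Lambda_set th"
  shows "7 * (L_len th (Suc m) + R_len th (Suc m)) \<le> 6 * DD th m"
proof -
  define k where "k = Suc m"
  have kL: "k \<in> Lambda_set th" using assms(4) by (simp add: k_def)
  define A where "A = real (cf_a th (k+1))"
  define B where "B = real (cf_a th (k+2))"
  define R' where "R' = real_of_int (rt_coef th k)"
  define d0 where "d0 = DD th m"
  define d1 where "d1 = DD th k"
  define d2 where "d2 = DD th (k+1)"
  define d3 where "d3 = DD th (k+2)"
  have a1: "1 \<le> cf_a th (k+1)" using a_eq(2)[OF assms(1-3), of k] by simp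
  have r1: "d0 = A * d1 + d2"
    using DD_rec[OF assms(1-3), of m] by (simp add: d0_def d1_def d2_def A_def k_def)
  have r2: "d1 = B * d2 + d3"
    using DD_rec[OF assms(1-3), of k] by (simp add: d3_def d1_def d2_def B_def)
  have pos: "0 < d1" "0 < d2" "0 < d3" using DD_pos[OF assms(1-3)] by (auto simp: d1_def d2_def d3_def)
  have dec: "d3 < d2" "d2 < d1" using DD_dec[OF assms(1-3)] by (auto simp: d1_def d2_def d3_def)
  have dn1: "dnint (real (cf_q th k) * th) \<le> d1" using dn_le[OF assms(1-3)] by (simp add: d1_def)
  have dn2: "dnint (real (cf_q th (k+1)) * th) \<le> d2" using dn_le[OF assms(1-3)] by (simp add: d2_def)
  have dn3: "dnint (real (cf_q th (k+2)) * th) \<le> d3" unfolding d3_def by (rule dn_le[OF assms(1-3)])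
  have rt0: "0 \<le> R'" using rt_bound(1)[OF a1] by (simp add: R'_def)
  have "R' * dnint (real (cf_q th k) * th) \<le> R' * d1" using rt0 dn1 by (rule mult_left_mono[rotated])
  then have RL: "R_len th k \<le> R' * d1 + d2" using dn2 by (simp add: R_len_def R'_def)
  show ?thesis
  proof (cases "cf_a th (k+2) = 2")
    case True
    have B2: "B = 2" using True by (simp add: B_def)
    have LL: "L_len th k \<le> d2 + d3" using True dn2 dn3 by (simp add: L_len_def)
    have ib: "7 * (rt_coef th k + 1) \<le> 6 * int (cf_a th (k+1)) + 2" by (rule rt_bound(2)[OF a1])
    have "real_of_int (7 * (rt_coef th k + 1)) \<le> real_of_int (6 * int (cf_a th (k+1)) + 2)"
      using ib by (simp only: of_int_le_iff)
    then have ibr: "7 * (R' + 1) \<le> 6 * A + 2" by (simp add: R'_def A_def)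
    have "(7 * (R' + 1)) * d1 \<le> (6 * A + 2) * d1" using ibr pos by (intro mult_right_mono) auto
    then have h: "7 * (R' * d1) + 7 * d1 \<le> 6 * (A * d1) + 2 * d1" by (simp add: algebra_simps)
    have "d1 = 2 * d2 + d3" using r2 B2 by simp
    then have "7 * L_len th k + 7 * R_len th k \<le> 6 * d0" using h LL RL r1 dec by linarith
    then show ?thesis unfolding k_def[symmetric] d0_def[symmetric] by (simp add: distrib_left)
  next
    case False
    then have a3: "3 \<le> cf_a th (k+1)" using kL by (auto simp: Lambda_set_def)
    have LL: "L_len th k \<le> d1" using False dn1 by (simp add: L_len_def)
    have ib: "7 * (rt_coef th k + 1) \<le> 6 * int (cf_a th (k+1)) - 1" by (rule rt_bound(3)[OF a1 a3])
    have "real_of_int (7 * (rt_coef th k + 1)) \<le> real_of_int (6 * int (cf_a th (k+1)) - 1)"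
      using ib by (simp only: of_int_le_iff)
    then have ibr: "7 * (R' + 1) \<le> 6 * A - 1" by (simp add: R'_def A_def)
    have "(7 * (R' + 1)) * d1 \<le> (6 * A - 1) * d1" using ibr pos by (intro mult_right_mono) auto
    then have h: "7 * (R' * d1) + 7 * d1 \<le> 6 * (A * d1) - d1" by (simp add: algebra_simps)
    then have "7 * L_len th k + 7 * R_len th k \<le> 6 * d0" using h LL RL r1 dec by linarith
    then show ?thesis unfolding k_def[symmetric] d0_def[symmetric] by (simp add: distrib_left)
  qed
qed

theorem lemma4p5:
  fixes th :: real and k i i' :: nat
  assumes "0 < th" "th < 1" "th \<notin> \<rat>"
    and "k \<in> Lambda_set th"
    and "1 \<le> i" "i \<le> cf_q th k" "1 \<le> i'" "i' \<le> cf_q th k" "i \<noteq> i'"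
  shows "\<forall>x \<in> I_int th k i. \<forall>y \<in> I_int th k i'.
           dnint (x - y) \<ge> dnint (real (cf_q th (k - 1)) * th) / 7"
proof (intro ballI)
  fix x y assume x: "x \<in> I_int th k i" and y: "y \<in> I_int th k i'"
  have th: "0 < th" "th < 1" "th \<notin> \<rat>" using assms(1-3) .
  obtain m where km: "k = Suc m"
    using assms(5-9) by (cases k) auto
  obtain s where s: "s \<in> I_offsets th k" "x = real i * th + s" using x unfolding I_int_def by auto
  obtain t where t: "t \<in> I_offsets th k" "y = real i' * th + t" using y unfolding I_int_def by auto
  have st: "\<bar>s - t\<bar> < L_len th k + R_len th k"
    using s(1) t(1) unfolding I_offsets_def by (auto split: if_splits)
  have key: "7 * (L_len th k + R_len th k) \<le> 6 * DD th m"
    using key_ineq[OF th] assms(4) km by simp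
  define M where "M = round (x - y)"
  define j where "j = int i - int i'"
  have jne: "j \<noteq> 0" using assms(9) by (simp add: j_def)
  have jb: "\<bar>j\<bar> < int (cf_q th (Suc m))" using assms(5-8) km by (auto simp: j_def)
  have ba: "DD th m \<le> \<bar>real_of_int j * th - real_of_int M\<bar>"
  proof (cases "0 < j")
    case True then show ?thesis using best_approx[OF th True, of m M] jb by simp
  next
    case False
    then have "0 < - j" using jne by simp
    from best_approx[OF th this, of m "- M"] jb
    have "DD th m \<le> \<bar>real_of_int (- j) * th - real_of_int (- M)\<bar>" by simp
    also have "\<dots> = \<bar>real_of_int j * th - real_of_int M\<bar>" by (simp add: abs_minus_commute)
    finally show ?thesis .
  qed
  have "x - y - real_of_int M = (real_of_int j * th - real_of_int M) + (s - t)"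
    using s(2) t(2) by (simp add: j_def algebra_simps)
  then have "dnint (x - y) \<ge> \<bar>real_of_int j * th - real_of_int M\<bar> - \<bar>s - t\<bar>"
    unfolding dnint_def M_def[symmetric] by linarith
  moreover have "dnint (real (cf_q th (k - 1)) * th) \<le> DD th m" using dn_le[OF th, of m] km by simp
  ultimately have f: "dnint (x - y) > DD th m - (L_len th k + R_len th k)"
    "dnint (real (cf_q th (k - 1)) * th) \<le> DD th m" using ba st by linarith+
  have "L_len th k + R_len th k \<le> 6 / 7 * DD th m" using key by (simp add: algebra_simps)
  then show "dnint (x - y) \<ge> dnint (real (cf_q th (k - 1)) * th) / 7"
    using f by linarith
qed

end
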